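(* Assume (H0)–(H2), (B1) and (B2) for the family of planar viscous shocks $\bar u^\varepsilon$ described in the context, and let $\lambda_*^\varepsilon(\tilde\xi)$ be the family of Evans-function roots with expansion $\lambda_*^\varepsilon(\tilde\xi)=i\tilde\xi\tau_*(\varepsilon)-\tilde\xi^2\beta(\varepsilon)+\delta(\varepsilon)\tilde\xi^3+r(\varepsilon,\tilde\xi)\tilde\xi^4$, $r\in C^1$. Then there is a unique $C^1$ function $\mathcal E$, defined for $\tilde\xi$ near $0$, with $\mathcal E(0)=0$, such that for $\varepsilon$ and $\tilde\xi\neq 0$ sufficiently small, $\mathrm{Re}\,\lambda_*^\varepsilon(\tilde\xi)=0$ if and only if $\varepsilon=\mathcal E(\tilde\xi)$. Moreover, in the generic case $\mathrm{Re}\,\delta(0)\ne0$, $$\mathcal E(\tilde\xi)\sim\frac{\mathrm{Re}\,\delta(0)}{\partial_\varepsilon\mathrm{Re}\,\beta(0)}\,\tilde\xi\quad\text{as }\tilde\xi\to0.$$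
   Context: Setting: a smooth family of systems $u_t=\Delta_xu-\sum_{j=1}^2F^j(\varepsilon,u)_{x_j}$, $u\in\mathbb R^n$, $x\in\mathbb R^2$, with standing planar viscous shocks $\bar u^\varepsilon(x_1)\to u_\pm(\varepsilon)$ solving $u'=F^1(\varepsilon,u)-F^1(\varepsilon,u_-)$; $A^j_\pm:=\partial_uF^j(\varepsilon,u_\pm)$. (H0): $F^j\in C^k$, $k\ge2$. (H1): $A^1_\pm$ have real distinct nonzero eigenvalues and $\xi_1A^1_\pm+\xi_2A^2_\pm$ is real-semisimple for $\xi\in\mathbb R^2$. (H2): $\bar u^\varepsilon$ is a transverse connecting orbit of the profile ODE, unique up to translation, with $\dim S(A^1_+)+\dim U(A^1_-)=n+1$ (so $A^1_-$ has $c-1$ negative, $A^1_+$ has $n-c$ positive eigenvalues). Lopatinski determinant: $\Delta^\varepsilon(\tilde\xi,\lambda):=\det(\mathcal R_1^-,\dots,\mathcal R_{c-1}^-,\mathcal R_{c+1}^+,\dots,\mathcal R_n^+,\lambda[u]+i\tilde\xi[F^2])$, where $[u]=u_+-u_-$, $[F^2]=F^2(\varepsilon,u_+)-F^2(\varepsilon,u_-)$, and $\{\mathcal R^+_i\}$, $\{\mathcal R^-_i\}$ are bases of the unstable subspace of $\mathcal A_+$, resp. the stable subspace of $\mathcal A_-$, with $\mathcal A_\pm(\tilde\xi,\lambda)=(\lambda I+i\tilde\xi A^2_\pm)(A^1_\pm)^{-1}$; it is homogeneous of degree one and analytic away from finitely many branch singularities. Evans function: $D(\tilde\xi,\lambda)$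 is the determinant, at $x_1=0$, of bases of solutions decaying at $-\infty$ and at $+\infty$ of the first-order form of the eigenvalue ODE $w''-(A^1(x_1)w)'-i\tilde\xi A^2(x_1)w-\tilde\xi^2w=\lambda w$, $A^j(x_1)=\partial_uF^j(\varepsilon,\bar u^\varepsilon(x_1))$, chosen analytically in $\lambda$; its zeros with $\mathrm{Re}\,\lambda\ge0$ are the eigenvalues of the linearized operator on the Fourier mode $e^{i\tilde\xi x_2}$. In polar coordinates $D(\rho\tilde\xi_0,\rho\lambda_0)$ it satisfies $D|_{\rho=0}=0$, $\partial_\rho D|_{\rho=0}=\gamma\Delta(\tilde\xi_0,\lambda_0)$ ($\gamma\ne0$ a transversality constant). (B1): for $\varepsilon$ small, $\Delta^\varepsilon(1,\lambda)$ has no roots with $\mathrm{Re}\,\lambda\ge0$ except a single simple purely imaginary root $\lambda=i\tau_*(\varepsilon)\ne0$, lying away from the singularities of $\Delta^\varepsilon$. Refined stability coefficient: $\beta(\varepsilon):=-D_{\rho\rho}/D_{\rho\lambda}|_{\rho=0}$ evaluated at $(\tilde\xi_0,\lambda_0)=(1,i\tau_*(\varepsilon))$. (B2): $\mathrm{Re}\,\beta(0)=0$ and $\partial_\varepsilon\mathrm{Re}\,\beta(0)<0$. Known fact (used as given): under (H0)–(H2) and (B1), for $\varepsilon,\tilde\xi$ small there is a smooth family of roots $(\tilde\xi,\lambda_*^\varepsilon(\tilde\xi))$ of $D$ with $\lambda_*^\varepsilon(\tilde\xi)=i\tilde\xi\tau_*(\varepsilon)-\tilde\xi^2\beta(\varepsilon)+\delta(\varepsilon)\tilde\xi^3+r(\varepsilon,\tilde\xi)\tilde\xi^4$,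 $r\in C^1$; this defines $\delta(\varepsilon)$. *)

theory Defs
  imports "HOL-Analysis.Analysis" "HOL-Library.Landau_Symbols"
begin

definition C1_on :: "'a::real_normed_vector set \<Rightarrow> ('a \<Rightarrow> 'b::real_normed_vector) \<Rightarrow> bool" where
  "C1_on S f \<longleftrightarrow> (\<exists>f'. (\<forall>x\<in>S. (f has_derivative blinfun_apply (f' x)) (at x)) \<and> continuous_on S f')"

definition neutral_curve :: "(real \<Rightarrow> real \<Rightarrow> complex) \<Rightarrow> (real \<Rightarrow> real) \<Rightarrow> bool" where
  "neutral_curve lam E \<longleftrightarrow>
     (\<exists>\<rho>>0. C1_on (ball 0 \<rho>) E) \<and> E 0 = 0 \<and>
     (\<exists>\<eta>>0. \<forall>\<epsilon> \<xi>. \<bar>\<epsilon>\<bar> < \<eta> \<longrightarrow> 0 < \<bar>\<xi>\<bar> \<longrightarrow> \<bar>\<xi>\<bar> < \<eta> \<longrightarrow>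
        (Re (lam \<epsilon> \<xi>) = 0 \<longleftrightarrow> \<epsilon> = E \<xi>))"

end

theory Submission
  imports Defs
begin

lemma mvt_any:
  fixes f f' :: "real \<Rightarrow> real"
  assumes "\<And>t. min x y \<le> t \<Longrightarrow> t \<le> max x y \<Longrightarrow> (f has_real_derivative f' t) (at t)"
  shows "\<exists>p. min x y \<le> p \<and> p \<le> max x y \<and> f y - f x = (y - x) * f' p"
proof (cases x y rule: linorder_cases)
  case less
  then obtain z where "x < z" "z < y" "f y - f x = (y - x) * f' z"
    using MVT2[of x y f f'] assms by auto
  then show ?thesis using less by (intro exI[of _ z]) auto
next
  case equal then show ?thesis by (intro exI[of _ x]) auto
next
  case greater
  then obtain z where "y < z" "z < x" "f x - f y = (x - y) * f' z"
    using MVT2[of y x f f'] assms by auto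
  then show ?thesis using greater by (intro exI[of _ z]) (auto simp: algebra_simps)
qed

lemma dist_pair_le: "dist (a::real, b::real) (0,0) \<le> \<bar>a\<bar> + \<bar>b\<bar>"
  by (simp add: dist_Pair_Pair dist_real_def sqrt_sum_squares_le_sum_abs)

lemma between_abs:
  fixes a b t r :: real
  assumes "min a b \<le> t" "t \<le> max a b" "\<bar>a\<bar> < r" "\<bar>b\<bar> < r"
  shows "\<bar>t\<bar> < r"
  using assms by (cases "a \<le> b") (auto simp: min_def max_def abs_less_iff)

lemma between_dist:
  fixes a b t :: real
  assumes "min a b \<le> t" "t \<le> max a b"
  shows "\<bar>t - a\<bar> \<le> \<bar>b - a\<bar>"
  using assms by (cases "a \<le> b") (auto simp: min_def max_def)

lemma tendsto_by_bound:
  fixes f :: "real \<Rightarrow> real"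
  assumes "eventually (\<lambda>h. \<bar>f h - l\<bar> \<le> K * \<bar>h\<bar>) (at 0)"
  shows "(f \<longlongrightarrow> l) (at 0)"
proof -
  have "((\<lambda>h. K * \<bar>h\<bar>) \<longlongrightarrow> K * \<bar>0\<bar>) (at (0::real))"
    by (intro tendsto_mult tendsto_const tendsto_rabs tendsto_ident_at)
  then have "((\<lambda>h. K * \<bar>h\<bar>) \<longlongrightarrow> 0) (at (0::real))" by simp
  note lim = this
  have ev: "eventually (\<lambda>h. norm (f h - l) \<le> K * \<bar>h\<bar>) (at 0)"
    using assms by simp
  have "((\<lambda>h. f h - l) \<longlongrightarrow> 0) (at 0)"
    by (rule Lim_null_comparison[OF ev lim])
  then show ?thesis by (rule LIM_zero_cancel)
qed

lemma implicit1d: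
  fixes g gE gX :: "real \<times> real \<Rightarrow> real" and \<kappa> :: real
  assumes kpos: "\<kappa> > 0"
  and dE: "\<And>e x. \<bar>e\<bar> < \<kappa> \<Longrightarrow> \<bar>x\<bar> < \<kappa> \<Longrightarrow> ((\<lambda>t. g (t, x)) has_real_derivative gE (e, x)) (at e)"
  and dX: "\<And>e x. \<bar>e\<bar> < \<kappa> \<Longrightarrow> \<bar>x\<bar> < \<kappa> \<Longrightarrow> ((\<lambda>t. g (e, t)) has_real_derivative gX (e, x)) (at x)"
  and cE: "\<And>e x. \<bar>e\<bar> < \<kappa> \<Longrightarrow> \<bar>x\<bar> < \<kappa> \<Longrightarrow> isCont gE (e, x)"
  and cX: "\<And>e x. \<bar>e\<bar> < \<kappa> \<Longrightarrow> \<bar>x\<bar> < \<kappa> \<Longrightarrow> isCont gX (e, x)"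
  and g0: "g (0,0) = 0" and gE0: "gE (0,0) > 0"
  shows "\<exists>a>0. \<exists>\<sigma>>0. \<exists>E. a < \<kappa> \<and> \<sigma> \<le> a \<and> (\<forall>e x. \<bar>e\<bar> < a \<longrightarrow> \<bar>x\<bar> < \<sigma> \<longrightarrow> gE (e, x) > 0) \<and> (\<forall>x. \<bar>x\<bar> < \<sigma> \<longrightarrow> \<bar>E x\<bar> < a \<and> g (E x, x) = 0)
      \<and> (\<forall>e x. \<bar>e\<bar> < a \<longrightarrow> \<bar>x\<bar> < \<sigma> \<longrightarrow> g (e, x) = 0 \<longrightarrow> e = E x)
      \<and> (\<forall>x. \<bar>x\<bar> < \<sigma> \<longrightarrow> (E has_real_derivative (- gX (E x, x) / gE (E x, x))) (at x))"
proof -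
  define c where "c = gE (0,0) / 2"
  define M where "M = \<bar>gX (0,0)\<bar> + 1"
  have cpos: "c > 0" using gE0 by (simp add: c_def)
  have Mpos: "M > 0" by (simp add: M_def)
  obtain d1 where d1: "d1 > 0" "\<And>z. dist z (0,0) < d1 \<Longrightarrow> dist (gE z) (gE (0,0)) < c"
  proof -
    have "\<forall>\<epsilon>>0. \<exists>\<delta>>0. \<forall>x'. dist x' (0, 0) < \<delta> \<longrightarrow> dist (gE x') (gE (0, 0)) < \<epsilon>"
      using cE[of 0 0] kpos unfolding continuous_at_eps_delta by simp
    then have "\<exists>\<delta>>0. \<forall>x'. dist x' (0, 0) < \<delta> \<longrightarrow> dist (gE x') (gE (0, 0)) < c" using cpos by simp
    then show ?thesis using that by blast
  qed
  obtain d2 where d2: "d2 > 0" "\<And>z. dist z (0,0) < d2 \<Longrightarrow> dist (gX z) (gX (0,0)) < 1"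
  proof -
    have "\<forall>\<epsilon>>0. \<exists>\<delta>>0. \<forall>x'. dist x' (0, 0) < \<delta> \<longrightarrow> dist (gX x') (gX (0, 0)) < \<epsilon>"
      using cX[of 0 0] kpos unfolding continuous_at_eps_delta by simp
    then have "\<exists>\<delta>>0. \<forall>x'. dist x' (0, 0) < \<delta> \<longrightarrow> dist (gX x') (gX (0, 0)) < 1" by simp
    then show ?thesis using that by blast
  qed
  define k where "k = min \<kappa> (min d1 d2) / 2"
  have kpos': "k > 0" using kpos d1 d2 by (simp add: k_def)
  have kk: "k < \<kappa>" using kpos d1 d2 by (simp add: k_def)
  have box: "gE (e,x) > c \<and> \<bar>gX (e,x)\<bar> \<le> M" if "\<bar>e\<bar> < k" "\<bar>x\<bar> < k" for e x
  proof -
    have "dist (e,x) (0,0) < d1" "dist (e,x) (0,0) < d2"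
      using dist_pair_le[of e x] that by (auto simp: k_def)
    from d1(2)[OF this(1)] d2(2)[OF this(2)] have
      "\<bar>gE (e, x) - gE (0, 0)\<bar> < c" "\<bar>gX (e, x) - gX (0, 0)\<bar> < 1"
      by (auto simp: dist_real_def)
    note ab = this
    have "gE (e, x) > c" using ab(1) abs_ge_minus_self[of "gE (e, x) - gE (0, 0)"]
      unfolding c_def by linarith
    moreover have "\<bar>gX (e, x)\<bar> \<le> M" using ab(2) abs_triangle_ineq2[of "gX (e, x)" "gX (0, 0)"]
      unfolding M_def by linarith
    ultimately show ?thesis by simp
  qed
  have monoS: "c * (e2 - e1) \<le> g (e2, x) - g (e1, x)"
    if "\<bar>e1\<bar> < k" "\<bar>e2\<bar> < k" "\<bar>x\<bar> < k" "e1 \<le> e2" for e1 e2 x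
  proof -
    have "((\<lambda>t. g (t, x)) has_real_derivative gE (t, x)) (at t)" if "min e1 e2 \<le> t" "t \<le> max e1 e2" for t
      using between_abs[OF that, of \<kappa>] \<open>\<bar>e1\<bar> < k\<close> \<open>\<bar>e2\<bar> < k\<close> \<open>\<bar>x\<bar> < k\<close> kk by (intro dE) auto
    then obtain p where p: "min e1 e2 \<le> p" "p \<le> max e1 e2" "g (e2, x) - g (e1, x) = (e2 - e1) * gE (p, x)"
      using mvt_any[of e1 e2 "\<lambda>t. g (t, x)" "\<lambda>t. gE (t, x)"] by blast
    have "gE (p, x) > c" using box[of p x] p that by auto
    then have "c * (e2 - e1) \<le> gE (p, x) * (e2 - e1)"
      using that(4) by (intro mult_right_mono) auto
    then show ?thesis using p(3) by (simp add: mult.commute)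
  qed
  have mono: "c * \<bar>e2 - e1\<bar> \<le> \<bar>g (e2, x) - g (e1, x)\<bar>"
    if "\<bar>e1\<bar> < k" "\<bar>e2\<bar> < k" "\<bar>x\<bar> < k" for e1 e2 x
  proof (cases "e1 \<le> e2")
    case True then show ?thesis using monoS[OF that True] by auto
  next
    case False then show ?thesis using monoS[of e2 e1 x] that by auto
  qed
  have lipx: "\<bar>g (e, x2) - g (e, x1)\<bar> \<le> M * \<bar>x2 - x1\<bar>"
    if "\<bar>e\<bar> < k" "\<bar>x1\<bar> < k" "\<bar>x2\<bar> < k" for e x1 x2
  proof -
    have "((\<lambda>t. g (e, t)) has_real_derivative gX (e, t)) (at t)" if "min x1 x2 \<le> t" "t \<le> max x1 x2" for t
      using between_abs[OF that, of \<kappa>] \<open>\<bar>e\<bar> < k\<close> \<open>\<bar>x1\<bar> < k\<close> \<open>\<bar>x2\<bar> < k\<close> kk by (intro dX) auto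
    then obtain p where p: "min x1 x2 \<le> p" "p \<le> max x1 x2" "g (e, x2) - g (e, x1) = (x2 - x1) * gX (e, p)"
      using mvt_any[of x1 x2 "\<lambda>t. g (e, t)" "\<lambda>t. gX (e, t)"] by blast
    have "\<bar>gX (e, p)\<bar> \<le> M" using box[of e p] p that by auto
    then have "\<bar>gX (e, p)\<bar> * \<bar>x2 - x1\<bar> \<le> M * \<bar>x2 - x1\<bar>"
      by (intro mult_right_mono) auto
    then show ?thesis using p(3) by (simp add: abs_mult mult.commute)
  qed
  have uniq: "e1 = e2" if "\<bar>e1\<bar> < k" "\<bar>e2\<bar> < k" "\<bar>x\<bar> < k" "g (e1, x) = 0" "g (e2, x) = 0" for e1 e2 x
    using mono[of e1 e2 x] that cpos by (auto simp: mult_le_0_iff)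
  define a where "a = k / 2"
  have apos: "a > 0" "a < k" using kpos' by (auto simp: a_def)
  define \<sigma> where "\<sigma> = min k (c * a / (M + 1))"
  have spos: "\<sigma> > 0" using kpos' cpos apos Mpos by (simp add: \<sigma>_def)
  have sk: "\<sigma> \<le> k" by (simp add: \<sigma>_def)
  have ex: "\<exists>e. \<bar>e\<bar> < k \<and> g (e, x) = 0" if x: "\<bar>x\<bar> < \<sigma>" for x
  proof -
    have "\<bar>x\<bar> * (M + 1) < c * a" using x Mpos by (simp add: \<sigma>_def less_divide_eq)
    then have Mx: "M * \<bar>x\<bar> < c * a" by (simp add: algebra_simps)
    have "c * (a - 0) \<le> g (a, 0) - g (0, 0)" using monoS[of 0 a 0] apos kpos' by auto
    moreover have "\<bar>g (a, x) - g (a, 0)\<bar> \<le> M * \<bar>x - 0\<bar>" using lipx[of a 0 x] apos x sk by auto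
    ultimately have pos: "g (a, x) > 0" using g0 Mx by auto
    have "c * (0 - (-a)) \<le> g (0, 0) - g (-a, 0)" using monoS[of "-a" 0 0] apos kpos' by auto
    moreover have "\<bar>g (-a, x) - g (-a, 0)\<bar> \<le> M * \<bar>x - 0\<bar>" using lipx[of "-a" 0 x] apos x sk by auto
    ultimately have neg: "g (-a, x) < 0" using g0 Mx by auto
    have "continuous_on {-a..a} (\<lambda>t. g (t, x))"
    proof (rule continuous_at_imp_continuous_on, rule ballI)
      fix t assume "t \<in> {-a..a}"
      then have "\<bar>t\<bar> < \<kappa>" "\<bar>x\<bar> < \<kappa>" using apos x sk kk by auto
      from DERIV_isCont[OF dE[OF this]] show "isCont (\<lambda>t. g (t, x)) t" .
    qed
    then obtain t where t: "-a \<le> t" "t \<le> a" "g (t, x) = 0"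
      using IVT'[of "\<lambda>t. g (t, x)" "-a" 0 a] pos neg apos by auto
    then show ?thesis using apos by (intro exI[of _ t]) auto
  qed
  define E where "E x = (THE e. \<bar>e\<bar> < k \<and> g (e, x) = 0)" for x
  have Eprop: "\<bar>E x\<bar> < k \<and> g (E x, x) = 0" if "\<bar>x\<bar> < \<sigma>" for x
  proof -
    have "\<exists>!e. \<bar>e\<bar> < k \<and> g (e, x) = 0"
      using ex[OF that] uniq[of _ _ x] that sk by auto
    then show ?thesis unfolding E_def by (rule theI')
  qed
  have Eun: "e = E x" if "\<bar>e\<bar> < k" "\<bar>x\<bar> < \<sigma>" "g (e, x) = 0" for e x
    using uniq[of e "E x" x] Eprop[of x] that sk by auto
  have lipE: "c * \<bar>E x2 - E x1\<bar> \<le> M * \<bar>x2 - x1\<bar>" if "\<bar>x1\<bar> < \<sigma>" "\<bar>x2\<bar> < \<sigma>" for x1 x2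
  proof -
    have "c * \<bar>E x2 - E x1\<bar> \<le> \<bar>g (E x2, x1) - g (E x1, x1)\<bar>"
      using mono[of "E x1" "E x2" x1] Eprop that sk by auto
    also have "\<dots> = \<bar>g (E x2, x1) - g (E x2, x2)\<bar>" using Eprop that by auto
    also have "\<dots> \<le> M * \<bar>x1 - x2\<bar>" using lipx[of "E x2" x2 x1] Eprop that sk by auto
    finally show ?thesis by (simp add: abs_minus_commute)
  qed
  have deriv: "(E has_real_derivative (- gX (E x, x) / gE (E x, x))) (at x)" if x: "\<bar>x\<bar> < \<sigma>" for x
  proof -
    define e where "e = E x"
    have e: "\<bar>e\<bar> < k" "g (e, x) = 0" using Eprop[OF x] by (auto simp: e_def)
    have "\<forall>h. \<exists>q. \<bar>x + h\<bar> < \<sigma> \<longrightarrow> min x (x + h) \<le> q \<and> q \<le> max x (x + h) \<and>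
        g (e, x + h) - g (e, x) = h * gX (e, q)"
    proof
      fix h
      show "\<exists>q. \<bar>x + h\<bar> < \<sigma> \<longrightarrow> min x (x + h) \<le> q \<and> q \<le> max x (x + h) \<and>
        g (e, x + h) - g (e, x) = h * gX (e, q)"
      proof (cases "\<bar>x + h\<bar> < \<sigma>")
        case True
        have "((\<lambda>t. g (e, t)) has_real_derivative gX (e, t)) (at t)" if "min x (x + h) \<le> t" "t \<le> max x (x + h)" for t
          using between_abs[OF that, of \<kappa>] True x e sk kk by (intro dX) auto
        from mvt_any[of x "x + h" "\<lambda>t. g (e, t)" "\<lambda>t. gX (e, t)", OF this]
        obtain q where "min x (x + h) \<le> q" "q \<le> max x (x + h)" "g (e, x + h) - g (e, x) = (x + h - x) * gX (e, q)"
          by blast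
        then show ?thesis by (intro exI[of _ q]) simp
      next
        case False then show ?thesis by blast
      qed
    qed
    then obtain Q where Q0: "\<forall>h. \<bar>x + h\<bar> < \<sigma> \<longrightarrow> min x (x + h) \<le> Q h \<and> Q h \<le> max x (x + h) \<and>
        g (e, x + h) - g (e, x) = h * gX (e, Q h)" by (rule choice[THEN exE])
    have Q: "min x (x + h) \<le> Q h \<and> Q h \<le> max x (x + h) \<and> g (e, x + h) - g (e, x) = h * gX (e, Q h)"
      if "\<bar>x + h\<bar> < \<sigma>" for h using Q0 that by blast
    have "\<forall>h. \<exists>p. \<bar>x + h\<bar> < \<sigma> \<longrightarrow> min e (E (x + h)) \<le> p \<and> p \<le> max e (E (x + h)) \<and>
        g (E (x + h), x + h) - g (e, x + h) = (E (x + h) - e) * gE (p, x + h)"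
    proof
      fix h
      show "\<exists>p. \<bar>x + h\<bar> < \<sigma> \<longrightarrow> min e (E (x + h)) \<le> p \<and> p \<le> max e (E (x + h)) \<and>
        g (E (x + h), x + h) - g (e, x + h) = (E (x + h) - e) * gE (p, x + h)"
      proof (cases "\<bar>x + h\<bar> < \<sigma>")
        case True
        have "((\<lambda>t. g (t, x + h)) has_real_derivative gE (t, x + h)) (at t)"
          if "min e (E (x + h)) \<le> t" "t \<le> max e (E (x + h))" for t
        proof -
          have "\<bar>E (x + h)\<bar> < \<kappa>" using Eprop[OF True] sk kk by linarith
          moreover have "\<bar>e\<bar> < \<kappa>" using e(1) kk by linarith
          ultimately have "\<bar>t\<bar> < \<kappa>" using between_abs[OF that] by blast
          moreover have "\<bar>x + h\<bar> < \<kappa>" using True sk kk by linarith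
          ultimately show ?thesis by (rule dE)
        qed
        from mvt_any[of e "E (x + h)" "\<lambda>t. g (t, x + h)" "\<lambda>t. gE (t, x + h)", OF this]
        obtain p where "min e (E (x + h)) \<le> p" "p \<le> max e (E (x + h))"
          "g (E (x + h), x + h) - g (e, x + h) = (E (x + h) - e) * gE (p, x + h)"
          by blast
        then show ?thesis by blast
      next
        case False then show ?thesis by blast
      qed
    qed
    then obtain P where P0: "\<forall>h. \<bar>x + h\<bar> < \<sigma> \<longrightarrow> min e (E (x + h)) \<le> P h \<and> P h \<le> max e (E (x + h)) \<and>
        g (E (x + h), x + h) - g (e, x + h) = (E (x + h) - e) * gE (P h, x + h)" by (rule choice[THEN exE])
    have P: "min e (E (x + h)) \<le> P h \<and> P h \<le> max e (E (x + h)) \<and>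
        g (E (x + h), x + h) - g (e, x + h) = (E (x + h) - e) * gE (P h, x + h)"
      if "\<bar>x + h\<bar> < \<sigma>" for h using P0 that by blast
    have ev: "eventually (\<lambda>h. \<bar>x + h\<bar> < \<sigma>) (at (0::real))"
      unfolding eventually_at
      using x by (intro exI[of _ "\<sigma> - \<bar>x\<bar>"]) (auto simp: dist_real_def)
    have Qlim: "(Q \<longlongrightarrow> x) (at 0)"
      apply (rule tendsto_by_bound[where K = 1])
      using ev
    proof eventually_elim
      case (elim h)
      from Q[OF elim] have "\<bar>Q h - x\<bar> \<le> \<bar>x + h - x\<bar>" using between_dist by blast
      then show ?case by simp
    qed
    have Plim: "(P \<longlongrightarrow> e) (at 0)"
    proof (rule tendsto_by_bound[where K = "M / c"])
      show "eventually (\<lambda>h. \<bar>P h - e\<bar> \<le> M / c * \<bar>h\<bar>) (at 0)"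
        using ev
      proof eventually_elim
        case (elim h)
        have 1: "\<bar>P h - e\<bar> \<le> \<bar>E (x + h) - e\<bar>" using P[OF elim] between_dist by blast
        have "c * \<bar>E (x + h) - e\<bar> \<le> M * \<bar>x + h - x\<bar>"
          using lipE[OF x elim] by (simp only: e_def)
        then have "\<bar>E (x + h) - e\<bar> * c \<le> M * \<bar>h\<bar>" by (simp add: mult.commute)
        then have "\<bar>E (x + h) - e\<bar> \<le> M * \<bar>h\<bar> / c"
          by (simp only: pos_le_divide_eq[OF cpos])
        moreover have "M * \<bar>h\<bar> / c = M / c * \<bar>h\<bar>" by simp
        ultimately show ?case using 1 by linarith
      qed
    qed
    have ek: "\<bar>e\<bar> < \<kappa>" "\<bar>x\<bar> < \<kappa>" using e x sk kk by linarith+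
    have l1: "((\<lambda>h. gX (e, Q h)) \<longlongrightarrow> gX (e, x)) (at 0)"
      by (rule isCont_tendsto_compose[OF cX[OF ek]], rule tendsto_Pair[OF tendsto_const Qlim])
    have "((\<lambda>h. x + h) \<longlongrightarrow> x + 0) (at (0::real))"
      by (intro tendsto_add tendsto_const tendsto_ident_at)
    then have xh: "((\<lambda>h. x + h) \<longlongrightarrow> x) (at (0::real))" by simp
    have l2: "((\<lambda>h. gE (P h, x + h)) \<longlongrightarrow> gE (e, x)) (at 0)"
      by (rule isCont_tendsto_compose[OF cE[OF ek]], rule tendsto_Pair[OF Plim xh])
    have gEpos: "gE (e, x) > c" using box[of e x] e x sk by linarith
    have l3: "((\<lambda>h. - gX (e, Q h) / gE (P h, x + h)) \<longlongrightarrow> - gX (e, x) / gE (e, x)) (at 0)"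
      by (rule tendsto_divide[OF tendsto_minus[OF l1] l2]) (use gEpos cpos in linarith)
    have "eventually (\<lambda>h. h \<noteq> (0::real)) (at 0)" by (simp add: eventually_at_filter)
    with ev have "eventually (\<lambda>h. - gX (e, Q h) / gE (P h, x + h) = (E (x + h) - E x) / h) (at 0)"
    proof eventually_elim
      case (elim h)
      have Ph: "min e (E (x + h)) \<le> P h" "P h \<le> max e (E (x + h))"
        "g (E (x + h), x + h) - g (e, x + h) = (E (x + h) - e) * gE (P h, x + h)"
        using P[OF elim(1)] by blast+
      have Qh: "g (e, x + h) - g (e, x) = h * gX (e, Q h)" using Q[OF elim(1)] by blast
      have Eh: "\<bar>E (x + h)\<bar> < k" "g (E (x + h), x + h) = 0" using Eprop[OF elim(1)] by blast+
      have pb: "\<bar>P h\<bar> < k" using between_abs[OF Ph(1,2) e(1) Eh(1)] .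
      have xhk: "\<bar>x + h\<bar> < k" using elim(1) sk by linarith
      have G: "gE (P h, x + h) > c" using box[OF pb xhk] by blast
      have eq0: "0 = (E (x + h) - e) * gE (P h, x + h) + h * gX (e, Q h)"
        using Ph(3) Qh Eh(2) e(2) by linarith
      have eq2: "- gX (e, Q h) * h = (E (x + h) - E x) * gE (P h, x + h)"
        using eq0 unfolding e_def by (simp add: algebra_simps)
      have "gE (P h, x + h) \<noteq> 0" using G cpos by linarith
      then show ?case using elim(2) eq2 by (simp add: field_simps)
    qed
    with l3 have "((\<lambda>h. (E (x + h) - E x) / h) \<longlongrightarrow> - gX (e, x) / gE (e, x)) (at 0)"
      by (rule Lim_transform_eventually)
    then show ?thesis unfolding DERIV_def e_def .
  qed
  show ?thesis
    apply (rule exI[of _ k], intro conjI kpos')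
    apply (rule exI[of _ \<sigma>], intro conjI spos)
    apply (rule exI[of _ E])
    apply (intro conjI allI impI)
    subgoal using kk .
    subgoal using sk .
    subgoal for e x using box[of e x] sk cpos by linarith
    subgoal for x using Eprop[of x] by simp
    subgoal for x using Eprop[of x] by simp
    subgoal for e x using Eun[of e x] by simp
    subgoal for x using deriv[of x] by simp
    done
qed

lemma re_deriv1:
  fixes f :: "real \<Rightarrow> complex"
  assumes "(f has_derivative blinfun_apply F) (at x)"
  shows "((\<lambda>t. Re (f t)) has_real_derivative Re (blinfun_apply F 1)) (at x)"
proof -
  have "((\<lambda>t. Re (f t)) has_derivative (\<lambda>h. Re (blinfun_apply F h))) (at x)"
    using bounded_linear.has_derivative[OF bounded_linear_Re assms] .
  moreover have "(\<lambda>h. Re (blinfun_apply F h)) = (\<lambda>h. Re (blinfun_apply F 1) * h)"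
  proof
    fix h :: real
    have "blinfun_apply F h = h *\<^sub>R blinfun_apply F 1" using blinfun.scaleR_right[of F h 1] by simp
    then show "Re (blinfun_apply F h) = Re (blinfun_apply F 1) * h" by simp
  qed
  ultimately show ?thesis by (simp add: has_field_derivative_def)
qed

lemma re_partial1:
  fixes r :: "real \<times> real \<Rightarrow> complex"
  assumes "(r has_derivative blinfun_apply F) (at (t, y))"
  shows "((\<lambda>s. Re (r (s, y))) has_real_derivative Re (blinfun_apply F (1, 0))) (at t)"
proof -
  have "((\<lambda>s. (s, y)) has_derivative (\<lambda>h. (h, 0))) (at t)"
    by (auto intro!: derivative_eq_intros)
  from has_derivative_compose[OF this assms]
  have "((\<lambda>s. r (s, y)) has_derivative (\<lambda>h. blinfun_apply F (h, 0))) (at t)" by simp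
  from bounded_linear.has_derivative[OF bounded_linear_Re this]
  have *: "((\<lambda>s. Re (r (s, y))) has_derivative (\<lambda>h. Re (blinfun_apply F (h, 0)))) (at t)" .
  have "(\<lambda>h. Re (blinfun_apply F (h, 0))) = (\<lambda>h. Re (blinfun_apply F (1, 0)) * h)"
  proof
    fix h :: real
    have "blinfun_apply F (h, 0) = h *\<^sub>R blinfun_apply F (1, 0)"
      using blinfun.scaleR_right[of F h "(1, 0)"] by simp
    then show "Re (blinfun_apply F (h, 0)) = Re (blinfun_apply F (1, 0)) * h" by simp
  qed
  with * show ?thesis by (simp add: has_field_derivative_def)
qed

lemma re_partial2:
  fixes r :: "real \<times> real \<Rightarrow> complex"
  assumes "(r has_derivative blinfun_apply F) (at (y, t))"
  shows "((\<lambda>s. Re (r (y, s))) has_real_derivative Re (blinfun_apply F (0, 1))) (at t)"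
proof -
  have "((\<lambda>s. (y, s)) has_derivative (\<lambda>h. (0, h))) (at t)"
    by (auto intro!: derivative_eq_intros)
  from has_derivative_compose[OF this assms]
  have "((\<lambda>s. r (y, s)) has_derivative (\<lambda>h. blinfun_apply F (0, h))) (at t)" by simp
  from bounded_linear.has_derivative[OF bounded_linear_Re this]
  have *: "((\<lambda>s. Re (r (y, s))) has_derivative (\<lambda>h. Re (blinfun_apply F (0, h)))) (at t)" .
  have "(\<lambda>h. Re (blinfun_apply F (0, h))) = (\<lambda>h. Re (blinfun_apply F (0, 1)) * h)"
  proof
    fix h :: real
    have "blinfun_apply F (0, h) = h *\<^sub>R blinfun_apply F (0, 1)"
      using blinfun.scaleR_right[of F h "(0, 1)"] by simp
    then show "Re (blinfun_apply F (0, h)) = Re (blinfun_apply F (0, 1)) * h" by simp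
  qed
  with * show ?thesis by (simp add: has_field_derivative_def)
qed

lemma isCont_re_apply:
  fixes F :: "'a::real_normed_vector \<Rightarrow> ('b::real_normed_vector \<Rightarrow>\<^sub>L complex)"
  assumes "continuous_on S F" "open S" "x \<in> S"
  shows "isCont (\<lambda>z. Re (blinfun_apply (F z) v)) x"
proof -
  have "isCont F x" using assms continuous_on_eq_continuous_at by blast
  then have "isCont (\<lambda>z. blinfun_apply (F z) v) x"
    by (intro blinfun.isCont continuous_const)
  then show ?thesis by (rule bounded_linear.isCont[OF bounded_linear_Re])
qed

lemma re_lam:
  fixes t b d rr :: complex and x ta :: real
  shows "Re (\<i> * complex_of_real (x * ta) - complex_of_real (x^2) * b + d * complex_of_real (x^3)
          + rr * complex_of_real (x^4)) = x^2 * (- Re b + x * Re d + x^2 * Re rr)"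
  by (simp add: algebra_simps power2_eq_square power3_eq_cube power4_eq_xxxx)

lemma C1_from_deriv:
  fixes E D :: "real \<Rightarrow> real"
  assumes "open S" "\<And>x. x \<in> S \<Longrightarrow> (E has_real_derivative D x) (at x)" "\<And>x. x \<in> S \<Longrightarrow> isCont D x"
  shows "C1_on S E"
  unfolding C1_on_def
proof (intro exI[of _ "\<lambda>x. blinfun_mult_right (D x)"] conjI ballI)
  fix x assume "x \<in> S"
  from assms(2)[OF this] show "(E has_derivative blinfun_apply (blinfun_mult_right (D x))) (at x)"
    by (simp add: has_field_derivative_def)
next
  have "continuous_on S D" using assms(1,3) continuous_on_eq_continuous_at by blast
  then show "continuous_on S (\<lambda>x. blinfun_mult_right (D x))"
    by (rule bounded_linear.continuous_on[OF bounded_linear_blinfun_mult_right])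
qed

theorem corollary1p11:
  fixes tau :: "real \<Rightarrow> real"
    and beta delta :: "real \<Rightarrow> complex"
    and r :: "real \<times> real \<Rightarrow> complex"
    and lam :: "real \<Rightarrow> real \<Rightarrow> complex"
    and e0 :: real
  assumes e0_pos: "e0 > 0"
    and beta_C1: "C1_on (ball 0 e0) beta"
    and delta_C1: "C1_on (ball 0 e0) delta"
    and r_C1: "C1_on (ball (0,0) e0) r"
    and expansion: "\<And>\<epsilon> \<xi>. \<bar>\<epsilon>\<bar> < e0 \<Longrightarrow> \<bar>\<xi>\<bar> < e0 \<Longrightarrow>
        lam \<epsilon> \<xi> = \<i> * complex_of_real (\<xi> * tau \<epsilon>) - complex_of_real (\<xi>^2) * beta \<epsilon>
                  + delta \<epsilon> * complex_of_real (\<xi>^3) + r (\<epsilon>, \<xi>) * complex_of_real (\<xi>^4)"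
    and B2_re: "Re (beta 0) = 0"
    and B2_deriv: "deriv (\<lambda>\<epsilon>. Re (beta \<epsilon>)) 0 < 0"
  shows "\<exists>E. neutral_curve lam E
            \<and> (\<forall>E'. neutral_curve lam E' \<longrightarrow> (\<exists>\<sigma>>0. \<forall>\<xi>. \<bar>\<xi>\<bar> < \<sigma> \<longrightarrow> E' \<xi> = E \<xi>))
            \<and> (Re (delta 0) \<noteq> 0 \<longrightarrow>
                 E \<sim>[at 0] (\<lambda>\<xi>. Re (delta 0) / deriv (\<lambda>\<epsilon>. Re (beta \<epsilon>)) 0 * \<xi>))"
proof -
  obtain B' where hb: "\<forall>x\<in>ball 0 e0. (beta has_derivative blinfun_apply (B' x)) (at x)"
    and cb: "continuous_on (ball 0 e0) B'" using beta_C1 unfolding C1_on_def by blast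
  obtain D' where hd: "\<forall>x\<in>ball 0 e0. (delta has_derivative blinfun_apply (D' x)) (at x)"
    and cd: "continuous_on (ball 0 e0) D'" using delta_C1 unfolding C1_on_def by blast
  obtain R' where hr: "\<forall>x\<in>ball (0,0) e0. (r has_derivative blinfun_apply (R' x)) (at x)"
    and cr: "continuous_on (ball (0,0) e0) R'" using r_C1 unfolding C1_on_def by blast
  define Bp where "Bp t = Re (blinfun_apply (B' t) 1)" for t
  define Dp where "Dp t = Re (blinfun_apply (D' t) 1)" for t
  define R1 where "R1 z = Re (blinfun_apply (R' z) (1, 0))" for z
  define R2 where "R2 z = Re (blinfun_apply (R' z) (0, 1))" for z
  define g where "g = (\<lambda>z::real\<times>real. - Re (beta (fst z)) + snd z * Re (delta (fst z)) + (snd z)^2 * Re (r z))"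
  define gE where "gE = (\<lambda>z::real\<times>real. - Bp (fst z) + snd z * Dp (fst z) + (snd z)^2 * R1 z)"
  define gX where "gX = (\<lambda>z::real\<times>real. Re (delta (fst z)) + 2 * snd z * Re (r z) + (snd z)^2 * R2 z)"
  define \<kappa> where "\<kappa> = e0 / 2"
  have kpos: "\<kappa> > 0" using e0_pos by (simp add: \<kappa>_def)
  have inb: "(e, x) \<in> ball (0,0) e0 \<and> e \<in> ball 0 e0 \<and> x \<in> ball 0 e0"
    if "\<bar>e\<bar> < \<kappa>" "\<bar>x\<bar> < \<kappa>" for e x
  proof -
    have "dist (e, x) (0, 0) < e0" using dist_pair_le[of e x] that by (simp add: \<kappa>_def)
    then show ?thesis using that by (auto simp: \<kappa>_def dist_commute)
  qed
  have DRb: "((\<lambda>t. Re (beta t)) has_real_derivative Bp t) (at t)" if "t \<in> ball 0 e0" for t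
    unfolding Bp_def using re_deriv1 hb that by blast
  have DRd: "((\<lambda>t. Re (delta t)) has_real_derivative Dp t) (at t)" if "t \<in> ball 0 e0" for t
    unfolding Dp_def using re_deriv1 hd that by blast
  have DR1: "((\<lambda>s. Re (r (s, y))) has_real_derivative R1 (t, y)) (at t)" if "(t, y) \<in> ball (0,0) e0" for t y
    unfolding R1_def using re_partial1 hr that by blast
  have DR2: "((\<lambda>s. Re (r (y, s))) has_real_derivative R2 (y, t)) (at t)" if "(y, t) \<in> ball (0,0) e0" for t y
    unfolding R2_def using re_partial2 hr that by blast
  have dE: "((\<lambda>t. g (t, x)) has_real_derivative gE (e, x)) (at e)" if "\<bar>e\<bar> < \<kappa>" "\<bar>x\<bar> < \<kappa>" for e x
  proof -
    have "((\<lambda>t. - Re (beta t) + x * Re (delta t) + x^2 * Re (r (t, x))) has_real_derivative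
        (- Bp e + x * Dp e + x^2 * R1 (e, x))) (at e)"
      using inb[OF that] by (intro DERIV_add DERIV_minus DERIV_cmult DRb DRd DR1) auto
    then show ?thesis unfolding g_def gE_def by simp
  qed
  have dX: "((\<lambda>t. g (e, t)) has_real_derivative gX (e, x)) (at x)" if "\<bar>e\<bar> < \<kappa>" "\<bar>x\<bar> < \<kappa>" for e x
  proof -
    have r2: "((\<lambda>s. Re (r (e, s))) has_real_derivative R2 (e, x)) (at x)" using inb[OF that] DR2 by blast
    have "((\<lambda>t. - Re (beta e) + t * Re (delta e) + t^2 * Re (r (e, t))) has_real_derivative
        (Re (delta e) + 2 * x * Re (r (e, x)) + x^2 * R2 (e, x))) (at x)"
    proof (rule DERIV_cong)
      have p2: "((\<lambda>t. t^2) has_real_derivative 2 * x) (at x)"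
        by (auto intro!: derivative_eq_intros)
      have lin: "((\<lambda>t. t * Re (delta e)) has_real_derivative Re (delta e)) (at x)"
        by (auto intro!: derivative_eq_intros)
      show "((\<lambda>t. - Re (beta e) + t * Re (delta e) + t^2 * Re (r (e, t))) has_real_derivative
        (0 + Re (delta e) + (2 * x * Re (r (e, x)) + R2 (e, x) * x^2))) (at x)"
        by (intro DERIV_add DERIV_const lin DERIV_mult[OF p2 r2])
    qed (simp add: algebra_simps)
    then show ?thesis unfolding g_def gX_def by simp
  qed
  have cE: "isCont gE (e, x)" if "\<bar>e\<bar> < \<kappa>" "\<bar>x\<bar> < \<kappa>" for e x
  proof -
    note ib = inb[OF that]
    have cf: "isCont fst (e, x)" "isCont snd (e, x)" by (intro continuous_intros)+
    have "isCont Bp e" unfolding Bp_def using isCont_re_apply[OF cb open_ball] ib by blast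
    then have c1: "isCont (\<lambda>z. Bp (fst z)) (e, x)" using isCont_o2[OF cf(1)] by simp
    have "isCont Dp e" unfolding Dp_def using isCont_re_apply[OF cd open_ball] ib by blast
    then have c2: "isCont (\<lambda>z. Dp (fst z)) (e, x)" using isCont_o2[OF cf(1)] by simp
    have c3: "isCont R1 (e, x)" unfolding R1_def using isCont_re_apply[OF cr open_ball] ib by blast
    show ?thesis unfolding gE_def
      using c1 c2 c3 cf(2) by (intro isCont_add isCont_minus isCont_mult isCont_power) auto
  qed
  have cX: "isCont gX (e, x)" if "\<bar>e\<bar> < \<kappa>" "\<bar>x\<bar> < \<kappa>" for e x
  proof -
    note ib = inb[OF that]
    have cf: "isCont fst (e, x)" "isCont snd (e, x)" by (intro continuous_intros)+
    have "isCont (\<lambda>t. Re (delta t)) e" using DERIV_isCont[OF DRd] ib by blast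
    then have c1: "isCont (\<lambda>z. Re (delta (fst z))) (e, x)" using isCont_o2[OF cf(1)] by simp
    have "isCont r (e, x)" using has_derivative_continuous hr ib by blast
    then have c2: "isCont (\<lambda>z. Re (r z)) (e, x)" by (rule bounded_linear.isCont[OF bounded_linear_Re])
    have c3: "isCont R2 (e, x)" unfolding R2_def using isCont_re_apply[OF cr open_ball] ib by blast
    have c4: "isCont (\<lambda>z. 2::real) (e, x)" by simp
    show ?thesis unfolding gX_def
      using c1 c2 c3 c4 cf(2) by (intro isCont_add isCont_mult isCont_power) auto
  qed
  have g0: "g (0, 0) = 0" using B2_re by (simp add: g_def)
  have dv: "deriv (\<lambda>\<epsilon>. Re (beta \<epsilon>)) 0 = Bp 0" using DERIV_imp_deriv[OF DRb] e0_pos by simp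
  then have Bp0: "Bp 0 < 0" using B2_deriv by simp
  have gE0: "gE (0, 0) > 0" using Bp0 by (simp add: gE_def)
  obtain a \<sigma> E where apos: "a > 0" and spos: "\<sigma> > 0" and ak: "a < \<kappa>" and sa: "\<sigma> \<le> a"
    and gEpos: "\<forall>e x. \<bar>e\<bar> < a \<longrightarrow> \<bar>x\<bar> < \<sigma> \<longrightarrow> gE (e, x) > 0"
    and Eex: "\<forall>x. \<bar>x\<bar> < \<sigma> \<longrightarrow> \<bar>E x\<bar> < a \<and> g (E x, x) = 0"
    and Eun: "\<forall>e x. \<bar>e\<bar> < a \<longrightarrow> \<bar>x\<bar> < \<sigma> \<longrightarrow> g (e, x) = 0 \<longrightarrow> e = E x"
    and Ed: "\<forall>x. \<bar>x\<bar> < \<sigma> \<longrightarrow> (E has_real_derivative (- gX (E x, x) / gE (E x, x))) (at x)"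
    using implicit1d[of \<kappa> g gE gX, OF kpos dE dX cE cX g0 gE0] by blast
  define Dd where "Dd x = - gX (E x, x) / gE (E x, x)" for x
  have ke: "\<kappa> < e0" using e0_pos by (simp add: \<kappa>_def)
  have lamre: "Re (lam \<epsilon> \<xi>) = \<xi>^2 * g (\<epsilon>, \<xi>)" if "\<bar>\<epsilon>\<bar> < e0" "\<bar>\<xi>\<bar> < e0" for \<epsilon> \<xi>
    using expansion[OF that] re_lam unfolding g_def by simp
  have E0: "E 0 = 0" using Eun[rule_format, of 0 0] apos spos g0 by simp
  have C1: "C1_on (ball 0 \<sigma>) E"
  proof (rule C1_from_deriv[where D = Dd])
    show "open (ball 0 \<sigma>)" by simp
  next
    fix x :: real assume "x \<in> ball 0 \<sigma>"
    then have x: "\<bar>x\<bar> < \<sigma>" by simp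
    show "(E has_real_derivative Dd x) (at x)" using Ed x unfolding Dd_def by blast
  next
    fix x :: real assume "x \<in> ball 0 \<sigma>"
    then have x: "\<bar>x\<bar> < \<sigma>" by simp
    have ex: "\<bar>E x\<bar> < \<kappa>" "\<bar>x\<bar> < \<kappa>" using Eex x ak sa by force+
    have cEx: "isCont E x" using DERIV_isCont Ed x by blast
    have p: "isCont (\<lambda>y. (E y, y)) x"
      by (rule continuous_Pair) (rule cEx, rule continuous_ident)
    have c1: "isCont (\<lambda>y. gX (E y, y)) x" using isCont_o2[OF p cX[OF ex]] by simp
    have c2: "isCont (\<lambda>y. gE (E y, y)) x" using isCont_o2[OF p cE[OF ex]] by simp
    have nz: "gE (E x, x) \<noteq> 0" using gEpos Eex x by force
    show "isCont Dd x" unfolding Dd_def using c1 c2 nz by (auto intro!: isCont_divide)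
  qed
  have Pr: "\<forall>\<epsilon> \<xi>. \<bar>\<epsilon>\<bar> < \<sigma> \<longrightarrow> 0 < \<bar>\<xi>\<bar> \<longrightarrow> \<bar>\<xi>\<bar> < \<sigma> \<longrightarrow> (Re (lam \<epsilon> \<xi>) = 0 \<longleftrightarrow> \<epsilon> = E \<xi>)"
  proof (intro allI impI)
    fix \<epsilon> \<xi> :: real assume h: "\<bar>\<epsilon>\<bar> < \<sigma>" "0 < \<bar>\<xi>\<bar>" "\<bar>\<xi>\<bar> < \<sigma>"
    have "\<bar>\<epsilon>\<bar> < e0" "\<bar>\<xi>\<bar> < e0" using h sa ak ke by linarith+
    then have "Re (lam \<epsilon> \<xi>) = \<xi>^2 * g (\<epsilon>, \<xi>)" by (rule lamre)
    moreover have "\<xi>^2 \<noteq> 0" using h by simp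
    ultimately have "Re (lam \<epsilon> \<xi>) = 0 \<longleftrightarrow> g (\<epsilon>, \<xi>) = 0" by simp
    also have "\<dots> \<longleftrightarrow> \<epsilon> = E \<xi>"
    proof
      assume "g (\<epsilon>, \<xi>) = 0" then show "\<epsilon> = E \<xi>" using Eun[rule_format, of \<epsilon> \<xi>] h sa by simp
    next
      assume "\<epsilon> = E \<xi>" then show "g (\<epsilon>, \<xi>) = 0" using Eex h by simp
    qed
    finally show "Re (lam \<epsilon> \<xi>) = 0 \<longleftrightarrow> \<epsilon> = E \<xi>" .
  qed
  have NC: "neutral_curve lam E"
    unfolding neutral_curve_def using C1 spos E0 Pr by blast
  have UN: "\<forall>E'. neutral_curve lam E' \<longrightarrow> (\<exists>s>0. \<forall>\<xi>. \<bar>\<xi>\<bar> < s \<longrightarrow> E' \<xi> = E \<xi>)"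
  proof (intro allI impI)
    fix E' assume "neutral_curve lam E'"
    then obtain \<rho>' \<eta>' where r1: "\<rho>' > 0" and r2: "C1_on (ball 0 \<rho>') E'" and E'0: "E' 0 = 0"
      and e1: "\<eta>' > 0"
      and P': "\<forall>\<epsilon> \<xi>. \<bar>\<epsilon>\<bar> < \<eta>' \<longrightarrow> 0 < \<bar>\<xi>\<bar> \<longrightarrow> \<bar>\<xi>\<bar> < \<eta>' \<longrightarrow> (Re (lam \<epsilon> \<xi>) = 0 \<longleftrightarrow> \<epsilon> = E' \<xi>)"
      unfolding neutral_curve_def by blast
    from r2 obtain F' where "\<forall>x\<in>ball 0 \<rho>'. (E' has_derivative blinfun_apply (F' x)) (at x)"
      unfolding C1_on_def by blast
    then have "(E' has_derivative blinfun_apply (F' 0)) (at 0)" using r1 by simp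
    then have cE': "isCont E' 0" by (rule has_derivative_continuous)
    have "\<forall>\<epsilon>>0. \<exists>\<delta>>0. \<forall>x'. dist x' 0 < \<delta> \<longrightarrow> dist (E' x') (E' 0) < \<epsilon>"
      using cE' unfolding continuous_at_eps_delta by simp
    moreover have "min \<sigma> \<eta>' > 0" using spos e1 by simp
    ultimately obtain s where s: "s > 0" "\<forall>x'. dist x' 0 < s \<longrightarrow> dist (E' x') (E' 0) < min \<sigma> \<eta>'"
      by blast
    show "\<exists>s>0. \<forall>\<xi>. \<bar>\<xi>\<bar> < s \<longrightarrow> E' \<xi> = E \<xi>"
    proof (intro exI[of _ "min s (min \<sigma> \<eta>')"] conjI allI impI)
      show "min s (min \<sigma> \<eta>') > 0" using s spos e1 by simp
    next
      fix \<xi> :: real assume h: "\<bar>\<xi>\<bar> < min s (min \<sigma> \<eta>')"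
      show "E' \<xi> = E \<xi>"
      proof (cases "\<xi> = 0")
        case True then show ?thesis using E'0 E0 by simp
      next
        case False
        have "\<bar>E' \<xi>\<bar> < min \<sigma> \<eta>'" using s(2)[rule_format, of \<xi>] h E'0 by (simp add: dist_real_def)
        then have b: "\<bar>E' \<xi>\<bar> < \<sigma>" "\<bar>E' \<xi>\<bar> < \<eta>'" by simp_all
        have "Re (lam (E' \<xi>) \<xi>) = 0" using P'[rule_format, of "E' \<xi>" \<xi>] b False h by simp
        then show ?thesis using Pr[rule_format, of "E' \<xi>" \<xi>] b False h by simp
      qed
    qed
  qed
  have ASY: "Re (delta 0) \<noteq> 0 \<longrightarrow> E \<sim>[at 0] (\<lambda>\<xi>. Re (delta 0) / deriv (\<lambda>\<epsilon>. Re (beta \<epsilon>)) 0 * \<xi>)"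
  proof
    assume nz: "Re (delta 0) \<noteq> 0"
    define K where "K = Re (delta 0) / Bp 0"
    have K0: "K \<noteq> 0" using nz Bp0 by (simp add: K_def)
    have "(E has_real_derivative Dd 0) (at 0)" using Ed spos unfolding Dd_def by simp
    moreover have "Dd 0 = K" unfolding Dd_def K_def gX_def gE_def using E0 by simp
    ultimately have "((\<lambda>h. (E (0 + h) - E 0) / h) \<longlongrightarrow> K) (at 0)" unfolding DERIV_def by simp
    then have "((\<lambda>h. E h / h) \<longlongrightarrow> K) (at 0)" using E0 by simp
    then have "((\<lambda>h. E h / h / K) \<longlongrightarrow> K / K) (at 0)"
      using K0 by (intro tendsto_divide tendsto_const) auto
    then have "((\<lambda>h. E h / (K * h)) \<longlongrightarrow> 1) (at 0)" using K0 by (simp add: divide_divide_eq_left mult.commute)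
    then have "E \<sim>[at 0] (\<lambda>h. K * h)" by (rule asymp_equivI')
    then show "E \<sim>[at 0] (\<lambda>\<xi>. Re (delta 0) / deriv (\<lambda>\<epsilon>. Re (beta \<epsilon>)) 0 * \<xi>)"
      using dv by (simp add: K_def)
  qed
  show ?thesis using NC UN ASY by blast
qed

end
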